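(* Assume the setting in the context, with $0<\lambda<\eta<1$. Then $\lim_{k\to\infty}\|z_k\|=0$.
   Context: Let $g:\mathbb{R}^n\to\mathbb{R}$, $h:\mathbb{R}^n\times\mathbb{R}^d\to\mathbb{R}$ satisfy: (A1) $h$ is twice differentiable in $x$, for each $\theta$ there are $0<\mu(\theta)\le L(\theta)$ with $\mu(\theta)I\preceq\nabla_x^2h(x,\theta)\preceq L(\theta)I$ for all $x$, and $\nabla_xh,\nabla^2_xh$ are continuous in $\theta$; (A2) $\nabla_x^2h$ is $L_H$-Lipschitz in $x$ and $\nabla^2_{x\theta}h$ is $L_J$-Lipschitz in $x$, uniformly in $\theta$. Let $\hat{x}(\theta)=\arg\min_xh(x,\theta)$, $f(\theta)=g(\hat{x}(\theta))$. (B) $f$ is continuously differentiable with $L_{\nabla f}$-Lipschitz gradient, $g$ continuously differentiable with $L_{\nabla g}$-Lipschitz gradient, $L_{\nabla f},L_{\nabla g}>0$, $g$ bounded below. Fix $\beta_0>0$, $0<\underline{\rho}<1<\overline{\rho}$, $\lambda<\eta$. Consider sequences $\theta_k\in\mathbb{R}^d$, $z_k\in\mathbb{R}^d\setminus\{0\}$, $\epsilon_k\ge0$, $\tilde{x}_k\in\mathbb{R}^n$ with $\|\tilde{x}_k-\hat{x}(\theta_k)\|\le\epsilon_k$, $\alpha_k,\beta_k>0$, with $\theta_{k+1}=\theta_k-\alpha_kz_k$ and $\|z_k-\nabla f(\theta_k)\|\le(1-\eta)\|z_k\|$ for all $k$. Set $w_k=\|\nabla g(\tilde{x}_k)\|+\|\nabla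 g(\tilde{x}_{k+1})\|$, $\bar{\epsilon}_k=\max\{\epsilon_k,\epsilon_{k+1}\}$, $\hat{s}_k=\sqrt{(\eta-\lambda)^2-4L_{\nabla f}(w_k\bar{\epsilon}_k+L_{\nabla g}\bar{\epsilon}_k^2)/\|z_k\|^2}$ (assumed real), $\underline{\alpha}_k=(\eta-\lambda-\hat{s}_k)/L_{\nabla f}$, $\overline{\alpha}_k=(\eta-\lambda+\hat{s}_k)/L_{\nabla f}$. Assume for every $k$: $\alpha_k=\underline{\rho}^{i_k}\beta_k$ where $i_k$ is the smallest nonnegative integer with $\underline{\rho}^{i_k}\beta_k\in[\underline{\alpha}_k,\overline{\alpha}_k]$; if $i_k>0$ then $\alpha_k>\underline{\rho}\,\overline{\alpha}_k$; and $\beta_{k+1}=\overline{\rho}\alpha_k$. *)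

theory Defs
  imports "HOL-Analysis.Analysis"
begin

text \<open>The lower-level solution map: a minimiser of h(., theta).
  Under (A1) the minimiser exists and is unique (strong convexity).\<close>
definition xhat :: "(real^'n \<Rightarrow> real^'d \<Rightarrow> real) \<Rightarrow> real^'d \<Rightarrow> real^'n" where
  "xhat h \<theta> = arg_min (\<lambda>x. h x \<theta>) (\<lambda>_. True)"

end

theory Submission
  imports Defs
begin

lemma descent:
  fixes f :: "'a::real_inner \<Rightarrow> real" and Df :: "'a \<Rightarrow> 'a"
  assumes d: "\<And>t. (f has_derivative (\<lambda>v. Df t \<bullet> v)) (at t)"
    and lip: "\<And>s t. norm (Df s - Df t) \<le> L * norm (s - t)"
  shows "f (x - v) \<le> f x - Df x \<bullet> v + L / 2 * (norm v)\<^sup>2"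
proof -
  define \<psi> where "\<psi> t = f (x - t *\<^sub>R v) + t * (Df x \<bullet> v) - L / 2 * t\<^sup>2 * (norm v)\<^sup>2" for t :: real
  have D: "DERIV \<psi> t :> (- (Df (x - t *\<^sub>R v) \<bullet> v) + Df x \<bullet> v - L * t * (norm v)\<^sup>2)" for t
  proof -
    have c: "((\<lambda>t. f (x - t *\<^sub>R v)) has_derivative (\<lambda>h. Df (x - t *\<^sub>R v) \<bullet> (- (h *\<^sub>R v)))) (at t)"
      by (rule has_derivative_compose[of "\<lambda>t. x - t *\<^sub>R v" _ _ _ f, OF _ d])
         (auto intro!: derivative_eq_intros)
    show ?thesis unfolding has_field_derivative_def \<psi>_def
      apply (rule has_derivative_eq_rhs)
       apply (rule derivative_eq_intros c refl | simp)+
      apply (rule ext, simp add: algebra_simps)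
      done
  qed
  have "\<psi> 1 \<le> \<psi> 0"
  proof (rule DERIV_nonpos_imp_nonincreasing[of 0 1])
    fix t :: real assume t: "0 \<le> t" "t \<le> 1"
    have "Df x \<bullet> v - Df (x - t *\<^sub>R v) \<bullet> v = (Df x - Df (x - t *\<^sub>R v)) \<bullet> v"
      by (simp add: inner_diff_left)
    also have "\<dots> \<le> norm (Df x - Df (x - t *\<^sub>R v)) * norm v" by (rule norm_cauchy_schwarz)
    also have "\<dots> \<le> L * norm (t *\<^sub>R v) * norm v"
      using lip[of x "x - t *\<^sub>R v"] by (simp add: mult_right_mono)
    also have "\<dots> = L * t * (norm v)\<^sup>2" using t by (simp add: power2_eq_square)
    finally show "\<exists>y. DERIV \<psi> t :> y \<and> y \<le> 0" using D[of t] by (intro exI[of _ _]) auto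
  qed simp
  then show ?thesis unfolding \<psi>_def by simp
qed

theorem theorem3p15:
  fixes g :: "real^'n \<Rightarrow> real" and h :: "real^'n \<Rightarrow> real^'d \<Rightarrow> real"
    and Dg :: "real^'n \<Rightarrow> real^'n" and Df :: "real^'d \<Rightarrow> real^'d"
    and Dxh :: "real^'n \<Rightarrow> real^'d \<Rightarrow> real^'n"
    and Hxx :: "real^'n \<Rightarrow> real^'d \<Rightarrow> real^'n^'n"
    and Jxt :: "real^'n \<Rightarrow> real^'d \<Rightarrow> real^'d^'n"
    and \<mu> L :: "real^'d \<Rightarrow> real" and L_H L_J L_Df L_Dg :: real
    and \<beta>0 \<rho>l \<rho>u lam \<eta> :: real
    and \<theta> z :: "nat \<Rightarrow> real^'d" and \<epsilon> \<alpha> \<beta> :: "nat \<Rightarrow> real"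
    and xt :: "nat \<Rightarrow> real^'n"
  \<comment> \<open>(A1)\<close>
  assumes A1_grad: "\<And>x \<theta>'. ((\<lambda>y. h y \<theta>') has_derivative (\<lambda>v. Dxh x \<theta>' \<bullet> v)) (at x)"
    and A1_hess: "\<And>x \<theta>'. ((\<lambda>y. Dxh y \<theta>') has_derivative (\<lambda>v. Hxx x \<theta>' *v v)) (at x)"
    and A1_mu: "\<And>\<theta>'. 0 < \<mu> \<theta>' \<and> \<mu> \<theta>' \<le> L \<theta>'"
    and A1_bounds: "\<And>x \<theta>' v. \<mu> \<theta>' * (v \<bullet> v) \<le> v \<bullet> (Hxx x \<theta>' *v v)
                                 \<and> v \<bullet> (Hxx x \<theta>' *v v) \<le> L \<theta>' * (v \<bullet> v)"
    and A1_cont_grad: "\<And>x. continuous_on UNIV (\<lambda>\<theta>'. Dxh x \<theta>')"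
    and A1_cont_hess: "\<And>x. continuous_on UNIV (\<lambda>\<theta>'. Hxx x \<theta>')"
  \<comment> \<open>(A2)\<close>
    and A2_cross: "\<And>x \<theta>'. ((\<lambda>t. Dxh x t) has_derivative (\<lambda>v. Jxt x \<theta>' *v v)) (at \<theta>')"
    and A2_LH: "\<And>x y \<theta>'. onorm (\<lambda>v. (Hxx x \<theta>' - Hxx y \<theta>') *v v) \<le> L_H * norm (x - y)"
    and A2_LJ: "\<And>x y \<theta>'. onorm (\<lambda>v. (Jxt x \<theta>' - Jxt y \<theta>') *v v) \<le> L_J * norm (x - y)"
  \<comment> \<open>(B)\<close>
    and B_f: "\<And>t. ((\<lambda>t'. g (xhat h t')) has_derivative (\<lambda>v. Df t \<bullet> v)) (at t)"
    and B_fcont: "continuous_on UNIV Df"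
    and B_fLip: "\<And>s t. norm (Df s - Df t) \<le> L_Df * norm (s - t)"
    and B_g: "\<And>x. (g has_derivative (\<lambda>v. Dg x \<bullet> v)) (at x)"
    and B_gcont: "continuous_on UNIV Dg"
    and B_gLip: "\<And>x y. norm (Dg x - Dg y) \<le> L_Dg * norm (x - y)"
    and B_pos: "L_Df > 0" "L_Dg > 0"
    and B_bdd: "bdd_below (range g)"
  \<comment> \<open>parameters\<close>
    and beta0: "\<beta>0 > 0" "\<beta> 0 = \<beta>0"
    and rho: "0 < \<rho>l" "\<rho>l < 1" "1 < \<rho>u"
    and lam_eta: "0 < lam" "lam < \<eta>" "\<eta> < 1"
  \<comment> \<open>sequences\<close>
    and z_nz: "\<And>k. z k \<noteq> 0"
    and eps_nn: "\<And>k. \<epsilon> k \<ge> 0"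
    and xt_err: "\<And>k. norm (xt k - xhat h (\<theta> k)) \<le> \<epsilon> k"
    and alpha_pos: "\<And>k. \<alpha> k > 0"
    and beta_pos: "\<And>k. \<beta> k > 0"
    and theta_upd: "\<And>k. \<theta> (Suc k) = \<theta> k - \<alpha> k *\<^sub>R z k"
    and z_err: "\<And>k. norm (z k - Df (\<theta> k)) \<le> (1 - \<eta>) * norm (z k)"
    and disc_real: "\<And>k. 0 \<le> (\<eta> - lam)\<^sup>2 - 4 * L_Df *
          ((norm (Dg (xt k)) + norm (Dg (xt (Suc k)))) * max (\<epsilon> k) (\<epsilon> (Suc k))
           + L_Dg * (max (\<epsilon> k) (\<epsilon> (Suc k)))\<^sup>2) / (norm (z k))\<^sup>2"
    and step: "\<And>k. let w = norm (Dg (xt k)) + norm (Dg (xt (Suc k)));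
                      ebar = max (\<epsilon> k) (\<epsilon> (Suc k));
                      s = sqrt ((\<eta> - lam)\<^sup>2 - 4 * L_Df * (w * ebar + L_Dg * ebar\<^sup>2) / (norm (z k))\<^sup>2);
                      al = (\<eta> - lam - s) / L_Df;
                      au = (\<eta> - lam + s) / L_Df
                  in \<exists>i::nat. \<alpha> k = \<rho>l ^ i * \<beta> k
                       \<and> \<rho>l ^ i * \<beta> k \<in> {al..au}
                       \<and> (\<forall>j<i. \<rho>l ^ j * \<beta> k \<notin> {al..au})
                       \<and> (i > 0 \<longrightarrow> \<alpha> k > \<rho>l * au)"
    and beta_upd: "\<And>k. \<beta> (Suc k) = \<rho>u * \<alpha> k"
  shows "(\<lambda>k. norm (z k)) \<longlonglongrightarrow> 0"
proof -
  define f where "f = (\<lambda>t. g (xhat h t))"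
  have fd: "\<And>t. (f has_derivative (\<lambda>v. Df t \<bullet> v)) (at t)" unfolding f_def by (rule B_f)
  have key: "\<alpha> k \<le> 2 * (\<eta> - lam) / L_Df \<and> (\<alpha> k = \<beta> k \<or> \<alpha> k > \<rho>l * ((\<eta> - lam) / L_Df))" for k
  proof -
    define w where "w = norm (Dg (xt k)) + norm (Dg (xt (Suc k)))"
    define ebar where "ebar = max (\<epsilon> k) (\<epsilon> (Suc k))"
    define c where "c = 4 * L_Df * (w * ebar + L_Dg * ebar\<^sup>2) / (norm (z k))\<^sup>2"
    define s where "s = sqrt ((\<eta> - lam)\<^sup>2 - c)"
    have st: "\<exists>i::nat. \<alpha> k = \<rho>l ^ i * \<beta> k
                       \<and> \<rho>l ^ i * \<beta> k \<in> {(\<eta> - lam - s) / L_Df..(\<eta> - lam + s) / L_Df}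
                       \<and> (\<forall>j<i. \<rho>l ^ j * \<beta> k \<notin> {(\<eta> - lam - s) / L_Df..(\<eta> - lam + s) / L_Df})
                       \<and> (i > 0 \<longrightarrow> \<alpha> k > \<rho>l * ((\<eta> - lam + s) / L_Df))"
      using step[of k] unfolding Let_def s_def c_def w_def ebar_def .
    then obtain i where i1: "\<alpha> k = \<rho>l ^ i * \<beta> k"
      and i2': "\<rho>l ^ i * \<beta> k \<in> {(\<eta> - lam - s) / L_Df..(\<eta> - lam + s) / L_Df}"
      and i3: "i > 0 \<longrightarrow> \<alpha> k > \<rho>l * ((\<eta> - lam + s) / L_Df)" by blast
    have i2: "\<alpha> k \<le> (\<eta> - lam + s) / L_Df" using i1 i2' by simp
    have w0: "w \<ge> 0" unfolding w_def by simp
    have e0: "ebar \<ge> 0" unfolding ebar_def using eps_nn[of k] by simp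
    have c0: "c \<ge> 0" unfolding c_def using w0 e0 B_pos by simp
    have dr: "0 \<le> (\<eta> - lam)\<^sup>2 - c" using disc_real[of k] unfolding c_def w_def ebar_def by simp
    have s0: "s \<ge> 0" unfolding s_def using dr by simp
    have s1: "s \<le> \<eta> - lam" unfolding s_def using c0 lam_eta
      by (metis abs_of_nonneg diff_ge_0_iff_ge diff_le_eq le_add_same_cancel1 less_imp_le real_sqrt_abs real_sqrt_le_mono)
    have a1: "\<alpha> k \<le> 2 * (\<eta> - lam) / L_Df"
      using i2 s1 B_pos by (smt (verit, ccfv_SIG) divide_right_mono)
    have a2: "\<alpha> k = \<beta> k \<or> \<alpha> k > \<rho>l * ((\<eta> - lam) / L_Df)"
    proof (cases "i = 0")
      case True then show ?thesis using i1 by simp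
    next
      case False
      then have "\<alpha> k > \<rho>l * ((\<eta> - lam + s) / L_Df)" using i3 by simp
      moreover have "\<rho>l * ((\<eta> - lam) / L_Df) \<le> \<rho>l * ((\<eta> - lam + s) / L_Df)"
        using s0 B_pos rho by (intro mult_left_mono divide_right_mono) auto
      ultimately show ?thesis by simp
    qed
    show ?thesis using a1 a2 by simp
  qed
  define m where "m = min \<beta>0 (\<rho>l * ((\<eta> - lam) / L_Df))"
  have m0: "m > 0" unfolding m_def using beta0 rho lam_eta B_pos by simp
  have am: "\<alpha> k \<ge> m" for k
  proof (induction k)
    case 0 then show ?case using key[of 0] beta0 unfolding m_def by auto
  next
    case (Suc j)
    have "\<beta> (Suc j) \<ge> \<alpha> j" using beta_upd[of j] alpha_pos[of j] rho
      by (simp add: less_imp_le mult_le_cancel_right1)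
    then show ?case using key[of "Suc j"] Suc unfolding m_def by auto
  qed
  have dec: "f (\<theta> (Suc k)) \<le> f (\<theta> k) - lam * m * (norm (z k))\<^sup>2" for k
  proof -
    let ?a = "\<alpha> k" and ?z = "z k" and ?D = "Df (\<theta> k)"
    have ip: "?D \<bullet> ?z \<ge> \<eta> * (norm ?z)\<^sup>2"
    proof -
      have "(?z - ?D) \<bullet> ?z \<le> norm (?z - ?D) * norm ?z" by (rule norm_cauchy_schwarz)
      also have "\<dots> \<le> (1 - \<eta>) * norm ?z * norm ?z" using z_err[of k] by (simp add: mult_right_mono)
      finally have "(?z - ?D) \<bullet> ?z \<le> (1 - \<eta>) * (norm ?z)\<^sup>2" by (simp add: power2_eq_square)
      moreover have "(?z - ?D) \<bullet> ?z = (norm ?z)\<^sup>2 - ?D \<bullet> ?z"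
        by (simp add: inner_diff_left power2_norm_eq_inner)
      ultimately show ?thesis by (simp add: algebra_simps)
    qed
    have "f (\<theta> (Suc k)) \<le> f (\<theta> k) - ?D \<bullet> (?a *\<^sub>R ?z) + L_Df / 2 * (norm (?a *\<^sub>R ?z))\<^sup>2"
      unfolding theta_upd by (rule descent[OF fd B_fLip])
    also have "\<dots> = f (\<theta> k) - ?a * (?D \<bullet> ?z) + ?a * (L_Df / 2 * ?a) * (norm ?z)\<^sup>2"
      using alpha_pos[of k] by (simp add: power2_eq_square algebra_simps)
    also have "\<dots> \<le> f (\<theta> k) - ?a * (\<eta> * (norm ?z)\<^sup>2) + ?a * (\<eta> - lam) * (norm ?z)\<^sup>2"
    proof -
      have "?a * (\<eta> * (norm ?z)\<^sup>2) \<le> ?a * (?D \<bullet> ?z)" using ip alpha_pos[of k] by simp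
      moreover have "L_Df / 2 * ?a \<le> \<eta> - lam" using key[of k] B_pos
        by (simp add: field_simps)
      then have "?a * (L_Df / 2 * ?a) * (norm ?z)\<^sup>2 \<le> ?a * (\<eta> - lam) * (norm ?z)\<^sup>2"
        using alpha_pos[of k] by (intro mult_right_mono mult_left_mono) auto
      ultimately show ?thesis by linarith
    qed
    also have "\<dots> = f (\<theta> k) - lam * ?a * (norm ?z)\<^sup>2" by (simp add: algebra_simps)
    also have "\<dots> \<le> f (\<theta> k) - lam * m * (norm ?z)\<^sup>2"
      using am[of k] lam_eta by (simp add: mult_right_mono)
    finally show ?thesis .
  qed
  obtain B where B: "\<And>x. g x \<ge> B" using B_bdd unfolding bdd_below_def by auto
  have sumb: "f (\<theta> n) \<le> f (\<theta> 0) - lam * m * (\<Sum>k<n. (norm (z k))\<^sup>2)" for n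
  proof (induction n)
    case 0 then show ?case by simp
  next
    case (Suc n) then show ?case using dec[of n] by (simp add: algebra_simps)
  qed
  have lm: "lam * m > 0" using m0 lam_eta by simp
  have bnd: "(\<Sum>k<n. (norm (z k))\<^sup>2) \<le> (f (\<theta> 0) - B) / (lam * m)" for n
  proof -
    have "B \<le> f (\<theta> n)" unfolding f_def by (rule B)
    then have "lam * m * (\<Sum>k<n. (norm (z k))\<^sup>2) \<le> f (\<theta> 0) - B" using sumb[of n] by linarith
    then show ?thesis using lm by (simp add: field_simps)
  qed
  have "summable (\<lambda>k. (norm (z k))\<^sup>2)"
    by (rule summableI_nonneg_bounded[where x="(f (\<theta> 0) - B) / (lam * m)"]) (use bnd in auto)
  then have "(\<lambda>k. (norm (z k))\<^sup>2) \<longlonglongrightarrow> 0" by (rule summable_LIMSEQ_zero)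
  then have "(\<lambda>k. sqrt ((norm (z k))\<^sup>2)) \<longlonglongrightarrow> sqrt 0" by (rule tendsto_real_sqrt)
  then show ?thesis by simp
qed

end
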